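(* Let $N$ be a positive integer, let $a_1\ge a_2\ge a_3$ be real numbers, and for $i=1,\dots,N$ let $\varphi_i(l,m,n,s)$ be real-valued functions of integers $l,m,n,s$. Write $\varphi_i(s)=\varphi_i(l,m,n,s)$ and $\boldsymbol\varphi(s)=(\varphi_1(s),\dots,\varphi_N(s))^T$. Suppose that for all integers $l,m,n,s$ and all $1\le i,i_1,i_2\le N$: (1) $\varphi_i(l+1,m,n,s)=\max(\varphi_i(l,m,n,s),\varphi_i(l,m,n,s+1)-a_1)$, $\varphi_i(l,m+1,n,s)=\max(\varphi_i(l,m,n,s),\varphi_i(l,m,n,s+1)-a_2)$, $\varphi_i(l,m,n+1,s)=\max(\varphi_i(l,m,n,s),\varphi_i(l,m,n,s+1)-a_3)$; (2) $\varphi_{i_1}(s)+\varphi_{i_2}(s)\le\max\big(\varphi_{i_1}(s-1)+\varphi_{i_2}(s+1),\ \varphi_{i_2}(s-1)+\varphi_{i_1}(s+1)\big)$; (3) for all integers $0\le k_1<k_2<k_3\le N$, $$\begin{aligned}&\mathrm{UP}[\boldsymbol\varphi(0)\cdots\widehat{\boldsymbol\varphi(k_2)}\cdots\boldsymbol\varphi(N)]+\mathrm{UP}[\boldsymbol\varphi(0)\cdots\widehat{\boldsymbol\varphi(k_1)}\cdots\widehat{\boldsymbol\varphi(k_3)}\cdots\boldsymbol\varphi(N+1)]\\ =\max\Big(&\mathrm{UP}[\boldsymbol\varphi(0)\cdots\widehat{\boldsymbol\varphi(k_3)}\cdots\boldsymbol\varphi(N)]+\mathrm{UP}[\boldsymbol\varphi(0)\cdots\widehat{\boldsymbol\varphi(k_1)}\cdots\widehat{\boldsymbol\varphi(k_2)}\cdots\boldsymbol\varphi(N+1)],\\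 &\mathrm{UP}[\boldsymbol\varphi(0)\cdots\widehat{\boldsymbol\varphi(k_1)}\cdots\boldsymbol\varphi(N)]+\mathrm{UP}[\boldsymbol\varphi(0)\cdots\widehat{\boldsymbol\varphi(k_2)}\cdots\widehat{\boldsymbol\varphi(k_3)}\cdots\boldsymbol\varphi(N+1)]\Big)\end{aligned}$$ (all vectors evaluated at the same $(l,m,n)$). Define $\tau(l,m,n)=\mathrm{UP}[\boldsymbol\varphi(0)\ \boldsymbol\varphi(1)\ \cdots\ \boldsymbol\varphi(N-1)]$, i.e. the ultradiscrete permanent of the $N\times N$ matrix $[\varphi_i(l,m,n,j-1)]_{1\le i,j\le N}$. Then for all integers $l,m,n$, $$\tau(l,m+1,n)+\tau(l+1,m,n+1)=\max\big(\tau(l+1,m,n)+\tau(l,m+1,n+1)-a_1+a_2,\ \tau(l,m,n+1)+\tau(l+1,m+1,n)\big).$$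
   Context: For a real $N\times N$ matrix $A=[a_{ij}]$, the ultradiscrete permanent is $\mathrm{UP}[A]=\max_{\pi}(a_{1\pi_1}+\cdots+a_{N\pi_N})$, maximum over all permutations $\pi$ of $\{1,\dots,N\}$. $\mathrm{UP}[\boldsymbol v_1\ \cdots\ \boldsymbol v_N]$ denotes the UP of the matrix with columns $\boldsymbol v_1,\dots,\boldsymbol v_N$ in that order; a hat $\widehat{\boldsymbol\varphi(k)}$ means that column is omitted from the list $\boldsymbol\varphi(0),\boldsymbol\varphi(1),\dots$ (so each matrix in condition (3) has exactly $N$ columns). *)

theory Defs
  imports Complex_Main "HOL-Combinatorics.Permutations"
begin

definition UP :: "nat \<Rightarrow> (nat \<Rightarrow> nat \<Rightarrow> real) \<Rightarrow> real" where
  "UP N A = Max {(\<Sum>i<N. A i (p i)) | p. p permutes {..<N}}"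

text \<open>UP of the N x N matrix whose j-th column (j = 0..N-1) is the vector
  phi(cols ! j) = (phi_1(cols ! j), ..., phi_N(cols ! j))^T at the point (l,m,n).
  Row i (0-based) corresponds to phi_(i+1).\<close>
definition UPcols :: "nat \<Rightarrow> (nat \<Rightarrow> int \<Rightarrow> int \<Rightarrow> int \<Rightarrow> int \<Rightarrow> real)
    \<Rightarrow> int \<Rightarrow> int \<Rightarrow> int \<Rightarrow> int list \<Rightarrow> real" where
  "UPcols N phi l m n cols = UP N (\<lambda>i j. phi (Suc i) l m n (cols ! j))"

definition omit :: "int \<Rightarrow> int set \<Rightarrow> int list" where
  "omit M K = filter (\<lambda>j. j \<notin> K) [0..M]"


definition tau :: "nat \<Rightarrow> (nat \<Rightarrow> int \<Rightarrow> int \<Rightarrow> int \<Rightarrow> int \<Rightarrow> real) \<Rightarrow> int \<Rightarrow> int \<Rightarrow> int \<Rightarrow> real" where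
  "tau N phi l m n = UP N (\<lambda>i j. phi (Suc i) l m n (int j))"

end

theory Submission
  imports Defs
begin

lemma UP_alt: "UP N A = Max ((\<lambda>p. \<Sum>i<N. A i (p i)) ` {p. p permutes {..<N}})"
  unfolding UP_def by (rule arg_cong[where f=Max]) blast

lemma UP_fin: "finite ((\<lambda>p. \<Sum>i<(N::nat). (A::nat\<Rightarrow>nat\<Rightarrow>real) i (p i)) ` {p. p permutes {..<N}})"
  by (rule finite_imageI, rule finite_permutations, rule finite_lessThan)

lemma UP_ge: "p permutes {..<N} \<Longrightarrow> (\<Sum>i<N. A i (p i)) \<le> UP N A"
  unfolding UP_alt by (rule Max_ge[OF UP_fin]) blast

lemma UP_obtain: "\<exists>p. p permutes {..<N} \<and> UP N A = (\<Sum>i<N. A i (p i))"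
proof -
  have "UP N A \<in> (\<lambda>p. \<Sum>i<N. A i (p i)) ` {p. p permutes {..<N}}"
    unfolding UP_alt by (rule Max_in[OF UP_fin]) (use permutes_id in blast)
  then show ?thesis by blast
qed

lemma perm_lt: "p permutes {..<N} \<Longrightarrow> i < N \<Longrightarrow> p i < N"
  by (metis lessThan_iff permutes_in_image)

lemma UP_cong: assumes "\<And>i j. i < N \<Longrightarrow> j < N \<Longrightarrow> A i j = B i j"
  shows "UP N A = UP N B"
proof -
  have "(\<lambda>p. \<Sum>i<N. A i (p i)) ` {p. p permutes {..<N}} = (\<lambda>p. \<Sum>i<N. B i (p i)) ` {p. p permutes {..<N}}"
    by (rule image_cong[OF refl], rule sum.cong[OF refl], rule assms) (auto simp: perm_lt)
  then show ?thesis unfolding UP_alt by simp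
qed

lemma sum_two:
  fixes g h :: "nat \<Rightarrow> real"
  assumes "r1 < N" "r2 < N" "r1 \<noteq> r2" "\<And>i. i < N \<Longrightarrow> i \<noteq> r1 \<Longrightarrow> i \<noteq> r2 \<Longrightarrow> g i = h i"
  shows "(\<Sum>i<N. g i) = (\<Sum>i<N. h i) + g r1 + g r2 - h r1 - h r2"
proof -
  have "(\<Sum>i<N. g i - h i) = (\<Sum>i\<in>{r1,r2}. g i - h i)"
    by (rule sum.mono_neutral_right) (use assms in auto)
  then show ?thesis using assms(3) by (simp add: sum_subtractf)
qed

lemma UP_swap:
  fixes A B :: "nat \<Rightarrow> nat \<Rightarrow> real"
  assumes pq: "p < N" "q < N" "p \<noteq> q"
  and same: "\<And>i j. i < N \<Longrightarrow> j < N \<Longrightarrow> j \<noteq> p \<Longrightarrow> j \<noteq> q \<Longrightarrow> A i j = B i j"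
  and key: "\<And>i1 i2. i1 < N \<Longrightarrow> i2 < N \<Longrightarrow> i1 \<noteq> i2 \<Longrightarrow>
     A i1 p + A i2 q \<le> max (B i1 p + B i2 q) (B i2 p + B i1 q)"
  shows "UP N A \<le> UP N B"
proof -
  obtain s where s: "s permutes {..<N}" and sA: "UP N A = (\<Sum>i<N. A i (s i))"
    using UP_obtain by blast
  define r1 where "r1 = inv s p"
  define r2 where "r2 = inv s q"
  have isv: "inv s permutes {..<N}" using permutes_inv[OF s] .
  have r: "r1 < N" "r2 < N" using perm_lt[OF isv] pq unfolding r1_def r2_def by auto
  have sr: "s r1 = p" "s r2 = q" unfolding r1_def r2_def using permutes_inverses[OF s] by auto
  have rne: "r1 \<noteq> r2" using sr pq by auto
  have oth: "s i \<noteq> p \<and> s i \<noteq> q" if "i \<noteq> r1" "i \<noteq> r2" for i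
    using that sr permutes_inj[OF s] by (metis injD)
  have ab: "A i (s i) = B i (s i)" if "i < N" "i \<noteq> r1" "i \<noteq> r2" for i
    using same[OF that(1) perm_lt[OF s that(1)]] oth[OF that(2,3)] by blast
  have eq1: "(\<Sum>i<N. A i (s i)) = (\<Sum>i<N. B i (s i)) + A r1 p + A r2 q - B r1 p - B r2 q"
    using sum_two[OF r rne, of "\<lambda>i. A i (s i)" "\<lambda>i. B i (s i)", OF ab] sr by simp
  show ?thesis
  proof (cases "A r1 p + A r2 q \<le> B r1 p + B r2 q")
    case True
    then show ?thesis using UP_ge[OF s, of B] eq1 sA by linarith
  next
    case False
    then have k: "A r1 p + A r2 q \<le> B r2 p + B r1 q" using key[OF r rne] by linarith
    define s' where "s' = s \<circ> transpose r1 r2"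
    have s': "s' permutes {..<N}" unfolding s'_def
      by (rule permutes_compose[OF _ s]) (rule permutes_swap_id, use r in auto)
    have s'v: "s' r1 = q" "s' r2 = p" "\<And>i. i \<noteq> r1 \<Longrightarrow> i \<noteq> r2 \<Longrightarrow> s' i = s i"
      unfolding s'_def using sr by (auto simp: transpose_def)
    have eq2: "(\<Sum>i<N. B i (s' i)) = (\<Sum>i<N. A i (s i)) + B r1 q + B r2 p - A r1 p - A r2 q"
    proof -
      have "B i (s' i) = A i (s i)" if "i < N" "i \<noteq> r1" "i \<noteq> r2" for i
        using ab[OF that] s'v(3)[OF that(2,3)] by simp
      from sum_two[OF r rne, of "\<lambda>i. B i (s' i)" "\<lambda>i. A i (s i)", OF this] show ?thesis
        using sr s'v by simp
    qed
    show ?thesis using UP_ge[OF s', of B] eq2 sA k by linarith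
  qed
qed

definition PLc :: "(int \<Rightarrow> nat \<Rightarrow> real) \<Rightarrow> nat \<Rightarrow> int list \<Rightarrow> real" where
  "PLc c N cols = UP N (\<lambda>i j. c (cols!j) i)"
definition shl :: "int list \<Rightarrow> (nat \<Rightarrow> nat) \<Rightarrow> nat \<Rightarrow> int list" where
  "shl s f N = map (\<lambda>j. s!j + int (f j)) [0..<N]"
definition ineq2 :: "(int \<Rightarrow> nat \<Rightarrow> real) \<Rightarrow> nat \<Rightarrow> bool" where
  "ineq2 c N \<longleftrightarrow> (\<forall>s i1 i2. i1 < N \<longrightarrow> i2 < N \<longrightarrow>
     c s i1 + c s i2 \<le> max (c (s-1) i1 + c (s+1) i2) (c (s-1) i2 + c (s+1) i1))"
definition evo :: "(int \<Rightarrow> nat \<Rightarrow> real) \<Rightarrow> (int \<Rightarrow> nat \<Rightarrow> real) \<Rightarrow> real \<Rightarrow> nat \<Rightarrow> bool" where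
  "evo c c' a N \<longleftrightarrow> (\<forall>s i. i < N \<longrightarrow> c' s i = max (c s i) (c (s+1) i - a))"

lemma shl_nth: "j < N \<Longrightarrow> shl s f N ! j = s!j + int (f j)"
  unfolding shl_def by simp
lemma shl_len[simp]: "length (shl s f N) = N"
  unfolding shl_def by simp

lemma sum_perm_reindex:
  fixes g :: "nat \<Rightarrow> real"
  assumes "p permutes {..<N}" shows "(\<Sum>i<N. g (p i)) = (\<Sum>j<N. g j)"
  using sum.reindex_bij_betw[OF permutes_imp_bij[OF assms], of g] by simp

lemma G_ge:
  assumes ev: "evo c c' a N" and f: "\<And>j. f j \<le> 1"
  shows "PLc c N (shl s f N) - a * (\<Sum>j<N. real (f j)) \<le> PLc c' N s"
proof -
  obtain p where p: "p permutes {..<N}" and pv: "PLc c N (shl s f N) = (\<Sum>i<N. c (shl s f N ! p i) i)"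
    using UP_obtain unfolding PLc_def by blast
  have ent: "c (shl s f N ! j) i - a * real (f j) \<le> c' (s!j) i" if "i < N" "j < N" for i j
  proof -
    have cv: "c' (s!j) i = max (c (s!j) i) (c (s!j+1) i - a)" using ev that unfolding evo_def by blast
    have "f j = 0 \<or> f j = 1" using f[of j] by linarith
    then show ?thesis using cv shl_nth[OF that(2)] by (auto simp: max_def)
  qed
  have "(\<Sum>i<N. c (shl s f N ! p i) i - a * real (f (p i))) \<le> (\<Sum>i<N. c' (s ! p i) i)"
    by (rule sum_mono) (use ent perm_lt[OF p] in auto)
  also have "\<dots> \<le> PLc c' N s" unfolding PLc_def by (rule UP_ge[OF p])
  finally have "(\<Sum>i<N. c (shl s f N ! p i) i) - a * (\<Sum>i<N. real (f (p i))) \<le> PLc c' N s"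
    by (simp add: sum_subtractf sum_distrib_left)
  then show ?thesis using pv sum_perm_reindex[OF p, of "\<lambda>j. real (f j)"] by simp
qed

lemma sum_split2:
  fixes g :: "nat \<Rightarrow> 'a::comm_monoid_add"
  assumes "Suc j < N"
  shows "(\<Sum>k<N. g k) = (\<Sum>k\<in>{..<N}-{j,Suc j}. g k) + g j + g (Suc j)"
proof -
  have "(\<Sum>k<N. g k) = (\<Sum>k\<in>{..<N}-{j,Suc j}. g k) + (\<Sum>k\<in>{j,Suc j}. g k)"
    by (rule sum.subset_diff) (use assms in auto)
  then show ?thesis by (simp add: add.assoc)
qed

lemma dom:
  assumes ineq: "ineq2 c N" and len: "length s = N" and srt: "sorted_wrt (<) s"
  shows "(\<forall>j. f j \<le> 1) \<Longrightarrow> \<exists>f'. (\<forall>j. f' j \<le> 1) \<and> sorted_wrt (<) (shl s f' N) \<and>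
     (\<Sum>j<N. f' j) = (\<Sum>j<N. f j) \<and> PLc c N (shl s f N) \<le> PLc c N (shl s f' N)"
proof (induction f rule: measure_induct_rule[where f="\<lambda>f. \<Sum>j<N. (N - j) * f j"])
  case (less f)
  show ?case
  proof (cases "sorted_wrt (<) (shl s f N)")
    case True
    then show ?thesis using less.prems by blast
  next
    case False
    then obtain j where j: "Suc j < N" and nl: "\<not> (shl s f N ! j < shl s f N ! Suc j)"
      unfolding sorted_wrt_iff_nth_Suc_transp[OF transp_on_less] by auto
    have sj: "s!j < s!Suc j" using sorted_wrt_nth_less[OF srt, of j "Suc j"] j len by simp
    have fj: "f j \<le> 1" "f (Suc j) \<le> 1" using less.prems by auto
    have tj: "shl s f N ! j = s!j + int (f j)" "shl s f N ! Suc j = s!Suc j + int (f (Suc j))"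
      using shl_nth j by auto
    have vals: "f j = 1" "f (Suc j) = 0" "s!Suc j = s!j + 1"
      using nl sj fj tj by linarith+
    define f2 where "f2 = f(j := 0, Suc j := 1)"
    have f2le: "\<forall>k. f2 k \<le> 1" using less.prems unfolding f2_def by auto
    have f2o: "f2 k = f k" if "k \<noteq> j" "k \<noteq> Suc j" for k using that unfolding f2_def by auto
    have m: "(\<Sum>k<N. (N - k) * f2 k) < (\<Sum>k<N. (N - k) * f k)"
    proof -
      have r: "(\<Sum>k\<in>{..<N}-{j,Suc j}. (N - k) * f2 k) = (\<Sum>k\<in>{..<N}-{j,Suc j}. (N - k) * f k)"
        by (rule sum.cong) (auto simp: f2o)
      show ?thesis using sum_split2[OF j, of "\<lambda>k. (N - k) * f2 k"] sum_split2[OF j, of "\<lambda>k. (N - k) * f k"]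
          r vals j unfolding f2_def by simp
    qed
    have sm: "(\<Sum>k<N. f2 k) = (\<Sum>k<N. f k)"
    proof -
      have r: "(\<Sum>k\<in>{..<N}-{j,Suc j}. f2 k) = (\<Sum>k\<in>{..<N}-{j,Suc j}. f k)"
        by (rule sum.cong) (auto simp: f2o)
      show ?thesis using sum_split2[OF j, of "\<lambda>k. f2 k"] sum_split2[OF j, of "\<lambda>k. f k"]
          r vals unfolding f2_def by simp
    qed
    have up: "PLc c N (shl s f N) \<le> PLc c N (shl s f2 N)"
      unfolding PLc_def
    proof (rule UP_swap[of j N "Suc j"])
      show "j < N" "Suc j < N" "j \<noteq> Suc j" using j by auto
      show "c (shl s f N ! k) i = c (shl s f2 N ! k) i" if "i < N" "k < N" "k \<noteq> j" "k \<noteq> Suc j" for i k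
        using that shl_nth f2o by simp
      show "c (shl s f N ! j) i1 + c (shl s f N ! Suc j) i2
         \<le> max (c (shl s f2 N ! j) i1 + c (shl s f2 N ! Suc j) i2) (c (shl s f2 N ! j) i2 + c (shl s f2 N ! Suc j) i1)"
        if "i1 < N" "i2 < N" "i1 \<noteq> i2" for i1 i2
      proof -
        have a: "shl s f N ! j = s!j + 1" "shl s f N ! Suc j = s!j + 1" using tj vals by auto
        have b: "shl s f2 N ! j = s!j + 1 - 1" "shl s f2 N ! Suc j = s!j + 1 + 1"
          using shl_nth j vals unfolding f2_def by auto
        show ?thesis unfolding a b using ineq that unfolding ineq2_def by blast
      qed
    qed
    obtain f' where f': "\<forall>j. f' j \<le> 1" "sorted_wrt (<) (shl s f' N)" "(\<Sum>j<N. f' j) = (\<Sum>j<N. f2 j)"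
        "PLc c N (shl s f2 N) \<le> PLc c N (shl s f' N)"
      using less.IH[OF m f2le] by blast
    show ?thesis using f' up sm by (intro exI[of _ f']) auto
  qed
qed

lemma G_le:
  assumes ev: "evo c c' a N" and ineq: "ineq2 c N" and len: "length s = N" and srt: "sorted_wrt (<) s"
  shows "\<exists>f. (\<forall>j. f j \<le> 1) \<and> sorted_wrt (<) (shl s f N) \<and>
     PLc c' N s \<le> PLc c N (shl s f N) - a * (\<Sum>j<N. real (f j))"
proof -
  obtain p where p: "p permutes {..<N}" and pv: "PLc c' N s = (\<Sum>i<N. c' (s ! p i) i)"
    using UP_obtain unfolding PLc_def by blast
  define f0 where "f0 j = (if c (s!j) (inv p j) < c (s!j+1) (inv p j) - a then 1 else 0::nat)" for j
  have f0le: "\<forall>j. f0 j \<le> 1" unfolding f0_def by auto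
  have ent: "c' (s ! p i) i = c (shl s f0 N ! p i) i - a * real (f0 (p i))" if "i < N" for i
  proof -
    have pi: "p i < N" using perm_lt[OF p that] .
    have ip: "inv p (p i) = i" using permutes_inverses[OF p] by simp
    have cv: "c' (s!p i) i = max (c (s!p i) i) (c (s!p i+1) i - a)" using ev that unfolding evo_def by blast
    show ?thesis unfolding cv shl_nth[OF pi] f0_def ip by (auto simp: max_def)
  qed
  have "PLc c' N s = (\<Sum>i<N. c (shl s f0 N ! p i) i) - a * (\<Sum>i<N. real (f0 (p i)))"
    unfolding pv using ent by (simp add: sum_subtractf sum_distrib_left)
  also have "\<dots> \<le> PLc c N (shl s f0 N) - a * (\<Sum>j<N. real (f0 j))"
    using UP_ge[OF p, of "\<lambda>i j. c (shl s f0 N ! j) i"] sum_perm_reindex[OF p, of "\<lambda>j. real (f0 j)"]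
    unfolding PLc_def by simp
  finally have 1: "PLc c' N s \<le> PLc c N (shl s f0 N) - a * (\<Sum>j<N. real (f0 j))" .
  obtain f' where f': "\<forall>j. f' j \<le> 1" "sorted_wrt (<) (shl s f' N)" "(\<Sum>j<N. f' j) = (\<Sum>j<N. f0 j)"
      "PLc c N (shl s f0 N) \<le> PLc c N (shl s f' N)"
    using dom[OF ineq len srt f0le] by blast
  have "(\<Sum>j<N. real (f' j)) = (\<Sum>j<N. real (f0 j))"
    using f'(3) by (metis of_nat_sum)
  then show ?thesis using 1 f' by (intro exI[of _ f']) auto
qed

lemma omit_sorted: "sorted_wrt (<) (omit M K)"
  unfolding omit_def by (rule sorted_wrt_filter) simp
lemma omit_set: "set (omit M K) = {0..M} - K"
  unfolding omit_def by auto

lemma strict_eq_omit: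
  assumes "sorted_wrt (<) t" "set t \<subseteq> {0..M} - K" "length t = card ({0..M} - K)"
  shows "t = omit M K"
proof -
  have d: "distinct t" "sorted t" using assms(1) strict_sorted_iff by auto
  have "card (set t) = card ({0..M} - K)" using distinct_card[OF d(1)] assms(3) by simp
  then have "set t = {0..M} - K" using card_subset_eq[OF _ assms(2)] by auto
  then show ?thesis
    using sorted_distinct_set_unique[OF d(2) d(1)] omit_sorted[of M K] omit_set[of M K] strict_sorted_iff
    by metis
qed

lemma card1: "0 \<le> k \<Longrightarrow> k \<le> M \<Longrightarrow> card ({0..M} - {k::int}) = nat M"
  by (subst card_Diff_singleton) auto
lemma card2: "0 \<le> i \<Longrightarrow> i < j \<Longrightarrow> j \<le> M \<Longrightarrow> card ({0..M} - {i::int, j}) = nat M - 1"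
proof -
  assume a: "0 \<le> i" "i < j" "j \<le> M"
  have "card ({0..M} - {i, j}) = card {0..M} - card {i,j}"
    by (rule card_Diff_subset) (use a in auto)
  then show ?thesis using a by simp
qed

lemma sum1: "0 \<le> k \<Longrightarrow> k \<le> M \<Longrightarrow> \<Sum>({0..M} - {k::int}) = \<Sum>{0..M} - k"
  by (subst sum_diff) auto
lemma sum2: "0 \<le> i \<Longrightarrow> i < j \<Longrightarrow> j \<le> M \<Longrightarrow> \<Sum>({0..M} - {i::int, j}) = \<Sum>{0..M} - i - j"
  by (subst sum_diff) auto
lemma sumtop: "0 \<le> M \<Longrightarrow> \<Sum>{0..M+1::int} = \<Sum>{0..M} + (M+1)"
proof -
  assume "0 \<le> M"
  then have "\<Sum>({0..M+1} - {M+1::int}) = \<Sum>{0..M+1} - (M+1)" by (intro sum1) auto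
  moreover have "{0..M+1} - {M+1::int} = {0..M}" by auto
  ultimately show ?thesis by simp
qed

lemma wsum:
  assumes "sorted_wrt (<) s" "sorted_wrt (<) (shl s f N)" "length s = N"
  shows "int (\<Sum>j<N. f j) = \<Sum>(set (shl s f N)) - \<Sum>(set s)"
proof -
  have d1: "distinct s" "distinct (shl s f N)" using assms strict_sorted_iff by auto
  have "\<Sum>(set (shl s f N)) = sum_list (shl s f N)"
    using sum_list_distinct_conv_sum_set[OF d1(2), of id] by simp
  also have "\<dots> = (\<Sum>j<N. s!j + int (f j))"
    by (simp add: sum_list_sum_nth shl_nth atLeast0LessThan)
  also have "\<dots> = sum_list s + int (\<Sum>j<N. f j)"
    using assms(3) by (simp add: sum.distrib sum_list_sum_nth atLeast0LessThan)
  also have "sum_list s = \<Sum>(set s)"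
    using sum_list_distinct_conv_sum_set[OF d1(1), of id] by simp
  finally show ?thesis by simp
qed

definition sk :: "nat \<Rightarrow> int \<Rightarrow> int list" where
  "sk N k = map (\<lambda>p. if int p < k then int p else int p + 1) [0..<N]"

lemma sk_nth: "p < N \<Longrightarrow> sk N k ! p = (if int p < k then int p else int p + 1)"
  unfolding sk_def by simp

lemma sk_sorted: "sorted_wrt (<) (sk N k)"
  unfolding sorted_wrt_iff_nth_less by (auto simp: sk_def)

lemma omit_sk: assumes "0 \<le> k" "k \<le> int N" shows "omit (int N) {k} = sk N k"
proof -
  have "sk N k = omit (int N) {k}"
  proof (rule strict_eq_omit[OF sk_sorted])
    show "set (sk N k) \<subseteq> {0..int N} - {k}" unfolding sk_def using assms by auto
    show "length (sk N k) = card ({0..int N} - {k})" using card1[OF assms] by (simp add: sk_def)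
  qed
  then show ?thesis by simp
qed

lemma s0_sorted: "sorted_wrt (<) (map int [0..<N])"
  unfolding sorted_wrt_iff_nth_less by auto
lemma s0_set: "set (map int [0..<N]) = {0..int N} - {int N}"
proof -
  have "set (map int [0..<N]) = int ` {0..<N}" by simp
  also have "\<dots> = {0..<int N}" by (simp add: image_int_atLeastLessThan)
  finally show ?thesis by auto
qed

lemma strict_gap:
  fixes t :: "int list"
  assumes "sorted_wrt (<) t" "p \<le> q" "q < length t"
  shows "t!p + int (q - p) \<le> t!q"
  using assms(2,3)
proof (induction q)
  case 0 then show ?case by simp
next
  case (Suc q)
  show ?case
  proof (cases "p = Suc q")
    case True then show ?thesis by simp
  next
    case False
    then have "p \<le> q" using Suc by simp
    then have "t!p + int (q - p) \<le> t!q" using Suc by simp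
    moreover have "t!q < t!Suc q" using sorted_wrt_nth_less[OF assms(1)] Suc by simp
    ultimately show ?thesis using \<open>p \<le> q\<close> by (simp add: Suc_diff_le)
  qed
qed

lemma A_le:
  assumes ev: "evo c c' a N" and ineq: "ineq2 c N"
  shows "\<exists>k. 0 \<le> k \<and> k \<le> int N \<and>
    PLc c' N (map int [0..<N]) \<le> PLc c N (omit (int N) {k}) - of_int (int N - k) * a"
proof -
  let ?s = "map int [0..<N]"
  obtain f where f: "\<forall>j. f j \<le> 1" "sorted_wrt (<) (shl ?s f N)"
    "PLc c' N ?s \<le> PLc c N (shl ?s f N) - a * (\<Sum>j<N. real (f j))"
    using G_le[OF ev ineq _ s0_sorted] by auto
  let ?t = "shl ?s f N"
  have tsub: "set ?t \<subseteq> {0..int N}"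
  proof
    fix x assume "x \<in> set ?t"
    then obtain j where j: "j < N" "x = ?t ! j" by (auto simp: in_set_conv_nth)
    then show "x \<in> {0..int N}" using f(1)[rule_format, of j] by (simp add: shl_nth)
  qed
  have ct: "card (set ?t) = N"
  proof -
    have "distinct ?t" using f(2) strict_sorted_iff by blast
    then show ?thesis using distinct_card by (metis shl_len)
  qed
  have "\<not> {0..int N} \<subseteq> set ?t"
  proof
    assume "{0..int N} \<subseteq> set ?t"
    then have "card {0..int N} \<le> card (set ?t)" by (intro card_mono) auto
    then show False using ct by simp
  qed
  then obtain k where k0: "k \<in> {0..int N}" "k \<notin> set ?t" by (meson subsetI)
  then have k: "0 \<le> k" "k \<le> int N" "k \<notin> set ?t" by auto
  have teq: "?t = omit (int N) {k}"
    by (rule strict_eq_omit[OF f(2)]) (use tsub k card1[OF k(1,2)] in auto)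
  have "int (\<Sum>j<N. f j) = \<Sum>(set ?t) - \<Sum>(set ?s)"
    by (rule wsum[OF s0_sorted f(2)]) simp
  also have "\<dots> = int N - k"
    unfolding teq omit_set s0_set using sum1[OF k(1,2)] sum1[of "int N" "int N"] by simp
  finally have w: "(\<Sum>j<N. real (f j)) = of_int (int N - k)"
    by (metis of_int_of_nat_eq of_nat_sum)
  show ?thesis using f(3) teq w k by (intro exI[of _ k]) (auto simp: mult.commute)
qed

lemma A_ge:
  assumes ev: "evo c c' a N" and k: "0 \<le> k" "k \<le> int N"
  shows "PLc c N (omit (int N) {k}) - of_int (int N - k) * a \<le> PLc c' N (map int [0..<N])"
proof -
  let ?s = "map int [0..<N]"
  define f where "f j = (if k \<le> int j then 1 else 0::nat)" for j
  have f1: "\<And>j. f j \<le> 1" unfolding f_def by auto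
  let ?t = "shl ?s f N"
  have tn: "?t ! j = (if k \<le> int j then int j + 1 else int j)" if "j < N" for j
    using that by (simp add: shl_nth f_def)
  have ts: "sorted_wrt (<) ?t"
    unfolding sorted_wrt_iff_nth_less using tn by auto
  have teq: "?t = omit (int N) {k}"
  proof (rule strict_eq_omit[OF ts])
    show "set ?t \<subseteq> {0..int N} - {k}"
    proof
      fix x assume "x \<in> set ?t"
      then obtain j where j: "j < N" "x = ?t ! j" by (auto simp: in_set_conv_nth)
      then show "x \<in> {0..int N} - {k}" using tn[OF j(1)] by auto
    qed
    show "length ?t = card ({0..int N} - {k})" using card1[OF k] by simp
  qed
  have "int (\<Sum>j<N. f j) = \<Sum>(set ?t) - \<Sum>(set ?s)"
    by (rule wsum[OF s0_sorted ts]) simp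
  also have "\<dots> = int N - k"
    unfolding teq omit_set s0_set using sum1[OF k] sum1[of "int N" "int N"] by simp
  finally have w: "(\<Sum>j<N. real (f j)) = of_int (int N - k)"
    by (metis of_int_of_nat_eq of_nat_sum)
  show ?thesis using G_ge[where f=f and s="?s", OF ev f1] teq w by (simp add: mult.commute)
qed

lemma B_le:
  assumes ev1: "evo c c1 b N" and ev2: "evo c1 c2 a N" and in0: "ineq2 c N" and in1: "ineq2 c1 N"
    and ba: "b \<le> a"
    and Ale: "\<exists>k. 0 \<le> k \<and> k \<le> int N \<and>
    PLc c2 N (map int [0..<N]) \<le> PLc c1 N (omit (int N) {k}) - of_int (int N - k) * a"
  shows "\<exists>i j. 0 \<le> i \<and> i < j \<and> j \<le> int N + 1 \<and>
    PLc c2 N (map int [0..<N]) \<le> PLc c N (omit (int N + 1) {i,j}) - of_int (int N - i) * b - of_int (int N + 1 - j) * a"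
proof -
  obtain k where k: "0 \<le> k" "k \<le> int N"
    and A1: "PLc c2 N (map int [0..<N]) \<le> PLc c1 N (omit (int N) {k}) - of_int (int N - k) * a"
    using Ale by blast
  let ?s = "sk N k"
  have sl: "length ?s = N" by (simp add: sk_def)
  obtain f where f: "\<forall>j. f j \<le> 1" "sorted_wrt (<) (shl ?s f N)"
    "PLc c1 N ?s \<le> PLc c N (shl ?s f N) - b * (\<Sum>j<N. real (f j))"
    using G_le[OF ev1 in0 sl sk_sorted] by auto
  let ?t = "shl ?s f N"
  have tn: "?t ! p = (if int p < k then int p else int p + 1) + int (f p)" if "p < N" for p
    using that by (simp add: shl_nth sk_nth)
  have tsub: "set ?t \<subseteq> {0..int N + 1}"
  proof
    fix x assume "x \<in> set ?t"
    then obtain p where p: "p < N" "x = ?t ! p" by (auto simp: in_set_conv_nth)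
    then show "x \<in> {0..int N + 1}" using f(1)[rule_format, of p] tn[OF p(1)] k by auto
  qed
  have ct: "card (set ?t) = N"
  proof -
    have "distinct ?t" using f(2) strict_sorted_iff by blast
    then show ?thesis using distinct_card by (metis shl_len)
  qed
  have cD: "card ({0..int N + 1} - set ?t) = 2"
    using card_Diff_subset[OF _ tsub] ct by simp
  then obtain x y where xy: "{0..int N + 1} - set ?t = {x,y}" "x \<noteq> y"
    by (auto simp: card_2_iff)
  define i where "i = min x y"
  define j where "j = max x y"
  have D: "{0..int N + 1} - set ?t = {i,j}" "i < j"
    using xy unfolding i_def j_def by (auto simp: min_def max_def)
  have ij: "0 \<le> i" "j \<le> int N + 1" "i \<notin> set ?t" "j \<notin> set ?t" using D by auto
  have st: "set ?t = {0..int N + 1} - {i,j}" using D(1) tsub by blast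
  have teq: "?t = omit (int N + 1) {i,j}"
    by (rule strict_eq_omit[OF f(2)]) (use st card2[OF ij(1) D(2) ij(2)] in auto)
  have kj: "k < j"
  proof (rule ccontr)
    assume "\<not> k < j"
    then have jk: "j \<le> k" by simp
    define ii where "ii = nat i"
    define jj where "jj = nat j - 1"
    have iiN: "ii < N" "jj < N" "ii \<le> jj" using D(2) ij jk k unfolding ii_def jj_def by auto
    have ti: "?t ! ii = i + int (f ii)" using tn[OF iiN(1)] D(2) jk ij unfolding ii_def by auto
    have "?t ! ii \<in> set ?t" using iiN by simp
    then have fi: "f ii = 1" using ti ij(3) f(1)[rule_format, of ii] by (cases "f ii") auto
    have tj: "?t ! jj = j - 1 + int (f jj)" using tn[OF iiN(2)] D(2) jk ij unfolding jj_def by auto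
    have g: "?t ! ii + int (jj - ii) \<le> ?t ! jj" by (rule strict_gap[OF f(2) iiN(3)]) (use iiN in simp)
    have "int (jj - ii) = j - 1 - i" using iiN D(2) ij unfolding ii_def jj_def by auto
    then have "?t ! jj = j" using g ti fi tj f(1)[rule_format, of jj] by linarith
    moreover have "?t ! jj \<in> set ?t" using iiN by simp
    ultimately show False using ij(4) by simp
  qed
  have ss: "set ?s = {0..int N} - {k}" using omit_sk[OF k] omit_set by metis
  have "int (\<Sum>p<N. f p) = \<Sum>(set ?t) - \<Sum>(set ?s)"
    by (rule wsum[OF sk_sorted f(2) sl])
  also have "\<dots> = int N + 1 - i - j + k"
    unfolding st ss
    using sum2[OF ij(1) D(2) ij(2)] sum1[OF k] sumtop[of "int N"] by simp
  finally have w: "(\<Sum>p<N. real (f p)) = of_int (int N + 1 - i - j + k)"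
    by (metis of_int_of_nat_eq of_nat_sum)
  have nn: "(a - b) * of_int (j - 1 - k) \<ge> 0" using ba kj by simp
  have e: "b * of_int (int N + 1 - i - j + k) + of_int (int N - k) * a
     - (of_int (int N - i) * b + of_int (int N + 1 - j) * a) = (a - b) * of_int (j - 1 - k)"
    by (simp add: algebra_simps)
  have "PLc c2 N (map int [0..<N]) \<le> PLc c N (omit (int N + 1) {i,j}) - b * of_int (int N + 1 - i - j + k) - of_int (int N - k) * a"
    using A1 f(3) omit_sk[OF k] teq w by simp
  then show ?thesis using nn e ij D(2) by (intro exI[of _ i] exI[of _ j]) auto
qed

lemma B_ge:
  assumes ev1: "evo c c1 b N" and ij: "0 \<le> i" "i < j" "j \<le> int N + 1"
    and Age: "PLc c1 N (omit (int N) {j - 1}) - of_int (int N - (j - 1)) * a \<le> PLc c2 N (map int [0..<N])"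
  shows "PLc c N (omit (int N + 1) {i,j}) - of_int (int N - i) * b - of_int (int N + 1 - j) * a
     \<le> PLc c2 N (map int [0..<N])"
proof -
  have k: "0 \<le> j - 1" "j - 1 \<le> int N" using ij by auto
  let ?s = "sk N (j - 1)"
  have sl: "length ?s = N" by (simp add: sk_def)
  define f where "f p = (if i \<le> int p then 1 else 0::nat)" for p
  have f1: "\<And>p. f p \<le> 1" unfolding f_def by auto
  let ?t = "shl ?s f N"
  have tn: "?t ! p = (if int p < j - 1 then int p else int p + 1) + (if i \<le> int p then 1 else 0)" if "p < N" for p
    using that by (simp add: shl_nth sk_nth f_def)
  have ts: "sorted_wrt (<) ?t"
    unfolding sorted_wrt_iff_nth_less using tn by auto
  have teq: "?t = omit (int N + 1) {i,j}"
  proof (rule strict_eq_omit[OF ts])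
    show "set ?t \<subseteq> {0..int N + 1} - {i,j}"
    proof
      fix x assume "x \<in> set ?t"
      then obtain p where p: "p < N" "x = ?t ! p" by (auto simp: in_set_conv_nth)
      then show "x \<in> {0..int N + 1} - {i,j}" using tn[OF p(1)] ij by auto
    qed
    show "length ?t = card ({0..int N + 1} - {i,j})" using card2[OF ij] by simp
  qed
  have ss: "set ?s = {0..int N} - {j - 1}" using omit_sk[OF k] omit_set by metis
  have st: "set ?t = {0..int N + 1} - {i,j}" using teq omit_set by metis
  have "int (\<Sum>p<N. f p) = \<Sum>(set ?t) - \<Sum>(set ?s)"
    by (rule wsum[OF sk_sorted ts sl])
  also have "\<dots> = int N - i"
    unfolding st ss
    using sum2[OF ij] sum1[OF k] sumtop[of "int N"] by simp
  finally have w: "(\<Sum>p<N. real (f p)) = of_int (int N - i)"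
    by (metis of_int_of_nat_eq of_nat_sum)
  have G: "PLc c N ?t - b * (\<Sum>p<N. real (f p)) \<le> PLc c1 N ?s"
    by (rule G_ge[where f=f, OF ev1 f1])
  have 1: "PLc c N (omit (int N + 1) {i,j}) - of_int (int N - i) * b \<le> PLc c1 N ?s"
    using G teq w by (simp add: mult.commute)
  have e: "int N - (j - 1) = int N + 1 - j" by simp
  have 2: "PLc c1 N ?s - of_int (int N + 1 - j) * a \<le> PLc c2 N (map int [0..<N])"
    using Age omit_sk[OF k] unfolding e by simp
  show ?thesis using 1 2 by linarith
qed

lemma tropical:
  fixes u :: "int \<Rightarrow> real" and Q :: "int \<Rightarrow> int \<Rightarrow> real" and N :: int
    and al be ga X Y Z1 W1 Z2 W2 :: real
  assumes Qu: "\<And>i. 0 \<le> i \<Longrightarrow> i \<le> N \<Longrightarrow> Q i (N+1) = u i"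
  and plu: "\<And>k1 k2 k3. 0 \<le> k1 \<Longrightarrow> k1 < k2 \<Longrightarrow> k2 < k3 \<Longrightarrow> k3 \<le> N \<Longrightarrow>
      u k2 + Q k1 k3 = max (u k3 + Q k1 k2) (u k1 + Q k2 k3)"
  and ord: "be \<le> al" "ga \<le> be"
  and Xle: "\<exists>k. 0 \<le> k \<and> k \<le> N \<and> X \<le> u k - of_int (N - k) * be"
  and Xge: "\<And>k. 0 \<le> k \<Longrightarrow> k \<le> N \<Longrightarrow> u k - of_int (N - k) * be \<le> X"
  and Z1le: "\<exists>k. 0 \<le> k \<and> k \<le> N \<and> Z1 \<le> u k - of_int (N - k) * al"
  and Z1ge: "\<And>k. 0 \<le> k \<Longrightarrow> k \<le> N \<Longrightarrow> u k - of_int (N - k) * al \<le> Z1"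
  and Z2le: "\<exists>k. 0 \<le> k \<and> k \<le> N \<and> Z2 \<le> u k - of_int (N - k) * ga"
  and Z2ge: "\<And>k. 0 \<le> k \<Longrightarrow> k \<le> N \<Longrightarrow> u k - of_int (N - k) * ga \<le> Z2"
  and Yle: "\<exists>i j. 0 \<le> i \<and> i < j \<and> j \<le> N + 1 \<and> Y \<le> Q i j - of_int (N - i) * ga - of_int (N + 1 - j) * al"
  and Yge: "\<And>i j. 0 \<le> i \<Longrightarrow> i < j \<Longrightarrow> j \<le> N + 1 \<Longrightarrow> Q i j - of_int (N - i) * ga - of_int (N + 1 - j) * al \<le> Y"
  and W1le: "\<exists>i j. 0 \<le> i \<and> i < j \<and> j \<le> N + 1 \<and> W1 \<le> Q i j - of_int (N - i) * ga - of_int (N + 1 - j) * be"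
  and W1ge: "\<And>i j. 0 \<le> i \<Longrightarrow> i < j \<Longrightarrow> j \<le> N + 1 \<Longrightarrow> Q i j - of_int (N - i) * ga - of_int (N + 1 - j) * be \<le> W1"
  and W2le: "\<exists>i j. 0 \<le> i \<and> i < j \<and> j \<le> N + 1 \<and> W2 \<le> Q i j - of_int (N - i) * be - of_int (N + 1 - j) * al"
  and W2ge: "\<And>i j. 0 \<le> i \<Longrightarrow> i < j \<Longrightarrow> j \<le> N + 1 \<Longrightarrow> Q i j - of_int (N - i) * be - of_int (N + 1 - j) * al \<le> W2"
  shows "X + Y = max (Z1 + W1 - al + be) (Z2 + W2)"
proof (rule antisym)
  obtain k where k: "0 \<le> k" "k \<le> N" "X \<le> u k - of_int (N - k) * be" using Xle by blast
  obtain i j where ij: "0 \<le> i" "i < j" "j \<le> N + 1" "Y \<le> Q i j - of_int (N - i) * ga - of_int (N + 1 - j) * al"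
    using Yle by blast
  show "X + Y \<le> max (Z1 + W1 - al + be) (Z2 + W2)"
  proof (cases "k \<le> i")
    case True
    have nn: "(be - ga) * of_int (i - k) \<ge> 0" using True ord by simp
    have "X + Y \<le> Z2 + W2" using k ij Z2ge[OF k(1,2)] W2ge[OF ij(1-3)] nn
      by (simp only: of_int_diff of_int_add of_int_1 algebra_simps) (linarith?)
    then show ?thesis by simp
  next
    case ki: False
    show ?thesis
    proof (cases "j \<le> k")
      case True
      have nn: "(al - be) * of_int (k - j) \<ge> 0" using True ord by simp
      have "X + Y \<le> Z1 + W1 - al + be" using k ij Z1ge[OF k(1,2)] W1ge[OF ij(1-3)] nn
        by (simp only: of_int_diff of_int_add of_int_1 algebra_simps) (linarith?)
      then show ?thesis by simp
    next
      case kj: False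
      show ?thesis
      proof (cases "j = N + 1")
        case True
        have q: "Q i j = u i" "Q k j = u k" using Qu ij k ki kj True by auto
        have f1: "u i - of_int (N - i) * ga \<le> Z2" using Z2ge[of i] ij True by auto
        have f2: "Q k j - of_int (N - k) * be - of_int (N + 1 - j) * al \<le> W2" using W2ge[of k j] ij k ki kj by auto
        have "X + Y \<le> Z2 + W2" using k ij f1 f2 q ki kj True
          by (simp only: of_int_diff of_int_add of_int_1 algebra_simps) (linarith?)
        then show ?thesis by simp
      next
        case False
        then have jN: "j \<le> N" using ij by simp
        have p: "u k + Q i j = max (u j + Q i k) (u i + Q k j)"
          using plu[OF ij(1) _ _ jN] ki kj by simp
        show ?thesis
        proof (cases "u j + Q i k \<le> u i + Q k j")
          case True
          then have e: "u k + Q i j = u i + Q k j" using p by simp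
          have f1: "u i - of_int (N - i) * ga \<le> Z2" using Z2ge[of i] ij jN by auto
          have f2: "Q k j - of_int (N - k) * be - of_int (N + 1 - j) * al \<le> W2" using W2ge[of k j] ij k ki kj by auto
          have "X + Y \<le> Z2 + W2" using k ij f1 f2 e ki kj jN
            by (simp only: of_int_diff of_int_add of_int_1 algebra_simps) (linarith?)
          then show ?thesis by simp
        next
          case False
          then have e: "u k + Q i j = u j + Q i k" using p by simp
          have f1: "u j - of_int (N - j) * al \<le> Z1" using Z1ge[of j] ij jN by auto
          have f2: "Q i k - of_int (N - i) * ga - of_int (N + 1 - k) * be \<le> W1" using W1ge[of i k] ij k ki kj by auto
          have "X + Y \<le> Z1 + W1 - al + be" using k ij f1 f2 e ki kj jN
            by (simp only: of_int_diff of_int_add of_int_1 algebra_simps) (linarith?)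
          then show ?thesis by simp
        qed
      qed
    qed
  qed
next
  show "max (Z1 + W1 - al + be) (Z2 + W2) \<le> X + Y"
  proof (rule max.boundedI)
    obtain k where k: "0 \<le> k" "k \<le> N" "Z1 \<le> u k - of_int (N - k) * al" using Z1le by blast
    obtain i j where ij: "0 \<le> i" "i < j" "j \<le> N + 1" "W1 \<le> Q i j - of_int (N - i) * ga - of_int (N + 1 - j) * be"
      using W1le by blast
    show "Z1 + W1 - al + be \<le> X + Y"
    proof (cases "k \<le> j")
      case True
      have nn: "(al - be) * of_int (j - k) \<ge> 0" using True ord by simp
      show ?thesis using k ij Xge[OF k(1,2)] Yge[OF ij(1-3)] nn
        by (simp only: of_int_diff of_int_add of_int_1 algebra_simps) (linarith?)
    next
      case False
      have p: "u j + Q i k = max (u k + Q i j) (u i + Q j k)"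
        using plu[OF ij(1,2)] False k by simp
      then have e: "u k + Q i j \<le> u j + Q i k" by simp
      have f1: "u j - of_int (N - j) * be \<le> X" using Xge[of j] ij k False by auto
      have f2: "Q i k - of_int (N - i) * ga - of_int (N + 1 - k) * al \<le> Y" using Yge[of i k] ij k False by auto
      show ?thesis using k ij f1 f2 e False
        by (simp only: of_int_diff of_int_add of_int_1 algebra_simps) (linarith?)
    qed
  next
    obtain k where k: "0 \<le> k" "k \<le> N" "Z2 \<le> u k - of_int (N - k) * ga" using Z2le by blast
    obtain i j where ij: "0 \<le> i" "i < j" "j \<le> N + 1" "W2 \<le> Q i j - of_int (N - i) * be - of_int (N + 1 - j) * al"
      using W2le by blast
    show "Z2 + W2 \<le> X + Y"
    proof (cases "i \<le> k")
      case True
      have nn: "(be - ga) * of_int (k - i) \<ge> 0" using True ord by simp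
      show ?thesis using k ij Xge[OF k(1,2)] Yge[OF ij(1-3)] nn
        by (simp only: of_int_diff of_int_add of_int_1 algebra_simps) (linarith?)
    next
      case ki: False
      show ?thesis
      proof (cases "j = N + 1")
        case True
        have q: "Q i j = u i" "Q k j = u k" using Qu ij k ki True by auto
        have f1: "u i - of_int (N - i) * be \<le> X" using Xge[of i] ij True by auto
        have f2: "Q k j - of_int (N - k) * ga - of_int (N + 1 - j) * al \<le> Y" using Yge[of k j] ij k ki by auto
        show ?thesis using k ij f1 f2 q ki True
          by (simp only: of_int_diff of_int_add of_int_1 algebra_simps) (linarith?)
      next
        case False
        then have jN: "j \<le> N" using ij by simp
        have p: "u i + Q k j = max (u j + Q k i) (u k + Q i j)"
          using plu[OF k(1) _ _ jN] ki ij by simp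
        then have e: "u k + Q i j \<le> u i + Q k j" by simp
        have f1: "u i - of_int (N - i) * be \<le> X" using Xge[of i] ij jN by auto
        have f2: "Q k j - of_int (N - k) * ga - of_int (N + 1 - j) * al \<le> Y" using Yge[of k j] ij k ki by auto
        show ?thesis using k ij f1 f2 e ki jN
          by (simp only: of_int_diff of_int_add of_int_1 algebra_simps) (linarith?)
      qed
    qed
  qed
qed

theorem theorem3p1:
  fixes N :: nat and a1 a2 a3 :: real
    and phi :: "nat \<Rightarrow> int \<Rightarrow> int \<Rightarrow> int \<Rightarrow> int \<Rightarrow> real"
  assumes N_pos: "N \<ge> 1"
    and a_ord: "a1 \<ge> a2" "a2 \<ge> a3"
    and evol1: "\<And>i l m n s. i \<in> {1..N} \<Longrightarrow>
        phi i (l+1) m n s = max (phi i l m n s) (phi i l m n (s+1) - a1)"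
    and evol2: "\<And>i l m n s. i \<in> {1..N} \<Longrightarrow>
        phi i l (m+1) n s = max (phi i l m n s) (phi i l m n (s+1) - a2)"
    and evol3: "\<And>i l m n s. i \<in> {1..N} \<Longrightarrow>
        phi i l m (n+1) s = max (phi i l m n s) (phi i l m n (s+1) - a3)"
    and ineq: "\<And>i1 i2 l m n s. i1 \<in> {1..N} \<Longrightarrow> i2 \<in> {1..N} \<Longrightarrow>
        phi i1 l m n s + phi i2 l m n s
          \<le> max (phi i1 l m n (s-1) + phi i2 l m n (s+1))
                 (phi i2 l m n (s-1) + phi i1 l m n (s+1))"
    and pluecker: "\<And>k1 k2 k3 l m n. 0 \<le> k1 \<Longrightarrow> k1 < k2 \<Longrightarrow> k2 < k3 \<Longrightarrow> k3 \<le> int N \<Longrightarrow>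
        UPcols N phi l m n (omit (int N) {k2}) + UPcols N phi l m n (omit (int N + 1) {k1, k3})
        = max (UPcols N phi l m n (omit (int N) {k3}) + UPcols N phi l m n (omit (int N + 1) {k1, k2}))
              (UPcols N phi l m n (omit (int N) {k1}) + UPcols N phi l m n (omit (int N + 1) {k2, k3}))"
  shows "\<forall>l m n. tau N phi l (m+1) n + tau N phi (l+1) m (n+1)
     = max (tau N phi (l+1) m n + tau N phi l (m+1) (n+1) - a1 + a2)
           (tau N phi l m (n+1) + tau N phi (l+1) (m+1) n)"
proof (intro allI)
  fix l m n
  define C where "C l m n = (\<lambda>s i. phi (Suc i) l m n s)" for l m n
  have tauC: "tau N phi l m n = PLc (C l m n) N (map int [0..<N])" for l m n
    unfolding tau_def PLc_def C_def by (rule UP_cong) simp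
  have UPC: "UPcols N phi l m n cols = PLc (C l m n) N cols" for l m n cols
    unfolding UPcols_def PLc_def C_def by simp
  have e1: "evo (C l m n) (C (l+1) m n) a1 N" for l m n
    unfolding evo_def C_def using evol1 by auto
  have e2: "evo (C l m n) (C l (m+1) n) a2 N" for l m n
    unfolding evo_def C_def using evol2 by auto
  have e3: "evo (C l m n) (C l m (n+1)) a3 N" for l m n
    unfolding evo_def C_def using evol3 by auto
  have iq: "ineq2 (C l m n) N" for l m n
    unfolding ineq2_def C_def using ineq by auto
  have a13: "a3 \<le> a1" using a_ord by linarith
  have Qu: "omit (int N + 1) {i, int N + 1} = omit (int N) {i}" if "0 \<le> i" "i \<le> int N" for i
  proof (rule strict_eq_omit[OF omit_sorted])
    show "set (omit (int N + 1) {i, int N + 1}) \<subseteq> {0..int N} - {i}" unfolding omit_set by auto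
    have "length (omit (int N + 1) {i, int N + 1}) = card ({0..int N + 1} - {i, int N + 1})"
      using distinct_card[of "omit (int N + 1) {i, int N + 1}"] omit_sorted[of "int N + 1" "{i, int N + 1}"]
        omit_set strict_sorted_iff by metis
    also have "\<dots> = N" using card2[of i "int N + 1" "int N + 1"] that by simp
    finally show "length (omit (int N + 1) {i, int N + 1}) = card ({0..int N} - {i})"
      using card1[OF that] by simp
  qed
  let ?c = "C l m n"
  show "tau N phi l (m+1) n + tau N phi (l+1) m (n+1)
     = max (tau N phi (l+1) m n + tau N phi l (m+1) (n+1) - a1 + a2)
           (tau N phi l m (n+1) + tau N phi (l+1) (m+1) n)"
    unfolding tauC
  proof (rule tropical[where u="\<lambda>k. PLc ?c N (omit (int N) {k})"
        and Q="\<lambda>i j. PLc ?c N (omit (int N + 1) {i,j})" and N="int N"])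
    show "\<And>i. 0 \<le> i \<Longrightarrow> i \<le> int N \<Longrightarrow> PLc ?c N (omit (int N + 1) {i, int N + 1}) = PLc ?c N (omit (int N) {i})"
      using Qu by simp
    show "\<And>k1 k2 k3. 0 \<le> k1 \<Longrightarrow> k1 < k2 \<Longrightarrow> k2 < k3 \<Longrightarrow> k3 \<le> int N \<Longrightarrow>
      PLc ?c N (omit (int N) {k2}) + PLc ?c N (omit (int N + 1) {k1, k3}) =
      max (PLc ?c N (omit (int N) {k3}) + PLc ?c N (omit (int N + 1) {k1, k2}))
          (PLc ?c N (omit (int N) {k1}) + PLc ?c N (omit (int N + 1) {k2, k3}))"
      using pluecker unfolding UPC by blast
    show "a2 \<le> a1" "a3 \<le> a2" using a_ord by auto
    show "\<exists>k. 0 \<le> k \<and> k \<le> int N \<and> PLc (C l (m+1) n) N (map int [0..<N]) \<le> PLc ?c N (omit (int N) {k}) - of_int (int N - k) * a2"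
      by (rule A_le[OF e2 iq])
    show "\<And>k. 0 \<le> k \<Longrightarrow> k \<le> int N \<Longrightarrow> PLc ?c N (omit (int N) {k}) - of_int (int N - k) * a2 \<le> PLc (C l (m+1) n) N (map int [0..<N])"
      by (rule A_ge[OF e2])
    show "\<exists>k. 0 \<le> k \<and> k \<le> int N \<and> PLc (C (l+1) m n) N (map int [0..<N]) \<le> PLc ?c N (omit (int N) {k}) - of_int (int N - k) * a1"
      by (rule A_le[OF e1 iq])
    show "\<And>k. 0 \<le> k \<Longrightarrow> k \<le> int N \<Longrightarrow> PLc ?c N (omit (int N) {k}) - of_int (int N - k) * a1 \<le> PLc (C (l+1) m n) N (map int [0..<N])"
      by (rule A_ge[OF e1])
    show "\<exists>k. 0 \<le> k \<and> k \<le> int N \<and> PLc (C l m (n+1)) N (map int [0..<N]) \<le> PLc ?c N (omit (int N) {k}) - of_int (int N - k) * a3"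
      by (rule A_le[OF e3 iq])
    show "\<And>k. 0 \<le> k \<Longrightarrow> k \<le> int N \<Longrightarrow> PLc ?c N (omit (int N) {k}) - of_int (int N - k) * a3 \<le> PLc (C l m (n+1)) N (map int [0..<N])"
      by (rule A_ge[OF e3])
    
    show "\<exists>i j. 0 \<le> i \<and> i < j \<and> j \<le> int N + 1 \<and> PLc (C (l+1) m (n+1)) N (map int [0..<N])
       \<le> PLc ?c N (omit (int N + 1) {i, j}) - of_int (int N - i) * a3 - of_int (int N + 1 - j) * a1"
      by (rule B_le[OF e3 e1 iq iq a13 A_le[OF e1 iq]])
    show "\<And>i j. 0 \<le> i \<Longrightarrow> i < j \<Longrightarrow> j \<le> int N + 1 \<Longrightarrow> PLc ?c N (omit (int N + 1) {i, j}) - of_int (int N - i) * a3 - of_int (int N + 1 - j) * a1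
       \<le> PLc (C (l+1) m (n+1)) N (map int [0..<N])"
      by (rule B_ge[OF e3 _ _ _ A_ge[OF e1]]) auto
    
    show "\<exists>i j. 0 \<le> i \<and> i < j \<and> j \<le> int N + 1 \<and> PLc (C l (m+1) (n+1)) N (map int [0..<N])
       \<le> PLc ?c N (omit (int N + 1) {i, j}) - of_int (int N - i) * a3 - of_int (int N + 1 - j) * a2"
      by (rule B_le[OF e3 e2 iq iq a_ord(2) A_le[OF e2 iq]])
    show "\<And>i j. 0 \<le> i \<Longrightarrow> i < j \<Longrightarrow> j \<le> int N + 1 \<Longrightarrow> PLc ?c N (omit (int N + 1) {i, j}) - of_int (int N - i) * a3 - of_int (int N + 1 - j) * a2
       \<le> PLc (C l (m+1) (n+1)) N (map int [0..<N])"
      by (rule B_ge[OF e3 _ _ _ A_ge[OF e2]]) auto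
    
    show "\<exists>i j. 0 \<le> i \<and> i < j \<and> j \<le> int N + 1 \<and> PLc (C (l+1) (m+1) n) N (map int [0..<N])
       \<le> PLc ?c N (omit (int N + 1) {i, j}) - of_int (int N - i) * a2 - of_int (int N + 1 - j) * a1"
      by (rule B_le[OF e2 e1 iq iq a_ord(1) A_le[OF e1 iq]])
    show "\<And>i j. 0 \<le> i \<Longrightarrow> i < j \<Longrightarrow> j \<le> int N + 1 \<Longrightarrow> PLc ?c N (omit (int N + 1) {i, j}) - of_int (int N - i) * a2 - of_int (int N + 1 - j) * a1
       \<le> PLc (C (l+1) (m+1) n) N (map int [0..<N])"
      by (rule B_ge[OF e2 _ _ _ A_ge[OF e1]]) auto
  qed
qed

end
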